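(* Let $D\in\mathcal{R}$. Then $\widetilde L^-(D)=\widetilde N^-(D)$.
   Context: Let $n\ge 1$ and $\Phi^+=\{(i,j)\in\mathbb{Z}^2:1\le j<i\le n\}$, with rows $\mathcal{R}_k=\{(k,s)\in\Phi^+\}$ and columns $\mathcal{C}_k=\{(r,k)\in\Phi^+\}$. A rook placement is a subset $D\subseteq\Phi^+$ with $|D\cap\mathcal{R}_k|\le1$ and $|D\cap\mathcal{C}_k|\le1$ for all $k$; $\mathcal{R}$ is the set of rook placements. For $D\in\mathcal{R}$, $R_D$ is the $n\times n$ integer matrix with $(R_D)_{i,j}=\#\{(a,b)\in D:a\ge i,\ b\le j\}$ for $i>j$ and $0$ otherwise; $D\le D'$ means $R_D\le R_{D'}$ entrywise. Order on $\Phi^+$: $(a,b)\le(c,d)$ iff $a\le c$ and $b\ge d$; $\widetilde M(D)$ is the set of minimal elements of $D$ for this order. Define $\widetilde N^-(D)=\{D\setminus\{(i,j)\}:(i,j)\in\widetilde M(D)\}$ and $\widetilde L^-(D)=\{T\in\mathcal{R}: T<D,\ |T|<|D|$, and every $S\in\mathcal{R}$ with $T\le S<D$ and $|S|<|D|$ equals $T\}$. *)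

theory Defs
  imports Main
begin

definition Phi :: "nat \<Rightarrow> (nat \<times> nat) set" where
  "Phi n = {(i, j). 1 \<le> j \<and> j < i \<and> i \<le> n}"

definition row :: "nat \<Rightarrow> nat \<Rightarrow> (nat \<times> nat) set" where
  "row n k = {p \<in> Phi n. fst p = k}"

definition col :: "nat \<Rightarrow> nat \<Rightarrow> (nat \<times> nat) set" where
  "col n k = {p \<in> Phi n. snd p = k}"

definition rook :: "nat \<Rightarrow> (nat \<times> nat) set \<Rightarrow> bool" where
  "rook n D \<longleftrightarrow> D \<subseteq> Phi n \<and>
     (\<forall>k. card (D \<inter> row n k) \<le> 1 \<and> card (D \<inter> col n k) \<le> 1)"

definition rmat :: "(nat \<times> nat) set \<Rightarrow> nat \<Rightarrow> nat \<Rightarrow> nat" where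
  "rmat D i j = (if i > j then card {(a, b) \<in> D. a \<ge> i \<and> b \<le> j} else 0)"

definition rle :: "nat \<Rightarrow> (nat \<times> nat) set \<Rightarrow> (nat \<times> nat) set \<Rightarrow> bool" where
  "rle n D D' \<longleftrightarrow> (\<forall>i\<in>{1..n}. \<forall>j\<in>{1..n}. rmat D i j \<le> rmat D' i j)"

definition rless :: "nat \<Rightarrow> (nat \<times> nat) set \<Rightarrow> (nat \<times> nat) set \<Rightarrow> bool" where
  "rless n D D' \<longleftrightarrow> rle n D D' \<and> D \<noteq> D'"

definition ple :: "nat \<times> nat \<Rightarrow> nat \<times> nat \<Rightarrow> bool" where
  "ple p q \<longleftrightarrow> fst p \<le> fst q \<and> snd p \<ge> snd q"

definition Mt :: "(nat \<times> nat) set \<Rightarrow> (nat \<times> nat) set" where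
  "Mt D = {p \<in> D. \<forall>q\<in>D. ple q p \<longrightarrow> q = p}"

definition Nt :: "(nat \<times> nat) set \<Rightarrow> (nat \<times> nat) set set" where
  "Nt D = {D - {p} | p. p \<in> Mt D}"

definition Lt :: "nat \<Rightarrow> (nat \<times> nat) set \<Rightarrow> (nat \<times> nat) set set" where
  "Lt n D = {T. rook n T \<and> rless n T D \<and> card T < card D \<and>
     (\<forall>S. rook n S \<and> rle n T S \<and> rless n S D \<and> card S < card D \<longrightarrow> S = T)}"

end

theory Submission
  imports Defs
begin

definition reg :: "nat \<Rightarrow> nat \<Rightarrow> (nat \<times> nat) set" where
  "reg i j = {q. i \<le> fst q \<and> snd q \<le> j}"

definition UU :: "(nat \<times> nat) set \<Rightarrow> (nat \<times> nat) set" where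
  "UU F = {q. \<exists>t\<in>F. fst t \<le> fst q \<and> snd q \<le> snd t}"

lemma rmat_reg: "j < i \<Longrightarrow> rmat X i j = card (X \<inter> reg i j)"
  unfolding rmat_def reg_def by (auto intro!: arg_cong[where f=card])

lemma finite_Phi: "finite (Phi n)"
proof -
  have "Phi n \<subseteq> {..n} \<times> {..n}" unfolding Phi_def by auto
  thus ?thesis by (rule finite_subset) auto
qed

lemma rook_fin: "rook n X \<Longrightarrow> finite X"
  unfolding rook_def using finite_Phi finite_subset by blast

lemma rle_reg:
  assumes "rle n X Y" "1 \<le> j" "j < i" "i \<le> n"
  shows "card (X \<inter> reg i j) \<le> card (Y \<inter> reg i j)"
proof -
  have "rmat X i j \<le> rmat Y i j" using assms unfolding rle_def by auto
  thus ?thesis using rmat_reg[OF assms(3)] by simp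
qed

lemma rmat_mono: "finite Y \<Longrightarrow> X \<subseteq> Y \<Longrightarrow> rmat X i j \<le> rmat Y i j"
proof (cases "j < i")
  case True
  assume "finite Y" "X \<subseteq> Y"
  then show ?thesis using True unfolding rmat_reg[OF True] by (intro card_mono) auto
next
  case False
  then show ?thesis unfolding rmat_def by simp
qed

lemma rle_trans: "rle n X Y \<Longrightarrow> rle n Y Z \<Longrightarrow> rle n X Z"
  unfolding rle_def using order_trans by blast

lemma B:
  assumes "finite F" "finite T" "finite D"
    "\<forall>t\<in>F. 1 \<le> snd t \<and> snd t < fst t \<and> fst t \<le> n \<and>
        card (T \<inter> reg (fst t) (snd t)) = card (D \<inter> reg (fst t) (snd t))"
    "\<And>i j. 1 \<le> j \<Longrightarrow> j < i \<Longrightarrow> i \<le> n \<Longrightarrow> card (T \<inter> reg i j) \<le> card (D \<inter> reg i j)"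
  shows "card (D \<inter> UU F) \<le> card (T \<inter> UU F)"
  using assms(1,4)
proof (induction "card F" arbitrary: F rule: less_induct)
  case less
  show ?case
  proof (cases "F = {}")
    case True then show ?thesis by (simp add: UU_def)
  next
    case False
    define i0 where "i0 = Max (fst ` F)"
    define F1 where "F1 = {t\<in>F. fst t = i0}"
    have "i0 \<in> fst ` F" using False less.prems(1) unfolding i0_def by (intro Max_in) auto
    hence F1ne: "F1 \<noteq> {}" unfolding F1_def by auto
    have fF1: "finite F1" using less.prems(1) unfolding F1_def by auto
    define j0 where "j0 = Max (snd ` F1)"
    have "j0 \<in> snd ` F1" using F1ne fF1 unfolding j0_def by (intro Max_in) auto
    then have tF: "(i0,j0) \<in> F" unfolding F1_def by force
    have imax: "\<forall>s\<in>F. fst s \<le> i0" using less.prems(1) unfolding i0_def by auto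
    define F' where "F' = F - {(i0,j0)}"
    have cardlt: "card F' < card F" using tF less.prems(1) unfolding F'_def
      by (meson card_Diff1_less)
    have IH: "card (D \<inter> UU F') \<le> card (T \<inter> UU F')"
      using less.hyps[OF cardlt] less.prems unfolding F'_def by auto
    have UF: "UU F = UU F' \<union> reg i0 j0" unfolding UU_def reg_def F'_def using tF by force
    have tt: "1 \<le> j0 \<and> j0 < i0 \<and> i0 \<le> n \<and> card (T \<inter> reg i0 j0) = card (D \<inter> reg i0 j0)"
      using less.prems(2) tF by fastforce
    show ?thesis
    proof (cases "\<exists>s\<in>F'. j0 \<le> snd s")
      case True
      then obtain s where s: "s\<in>F'" "j0 \<le> snd s" by blast
      have "fst s \<le> i0" using imax s(1) F'_def by auto
      hence "reg i0 j0 \<subseteq> UU F'" using s unfolding reg_def UU_def by force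
      hence "UU F = UU F'" using UF by auto
      thus ?thesis using IH by simp
    next
      case False
      hence lt: "\<forall>s\<in>F'. snd s < j0" by auto
      show ?thesis
      proof (cases "F' = {}")
        case True
        hence "UU F = reg i0 j0" using UF by (simp add: UU_def)
        thus ?thesis using tt by simp
      next
        case False
        define J where "J = Max (snd ` F')"
        have fF': "finite F'" using less.prems(1) F'_def by auto
        have "J \<in> snd ` F'" using False fF' unfolding J_def by (intro Max_in) auto
        then obtain s where s: "s \<in> F'" "snd s = J" by auto
        have Jmax: "\<forall>s\<in>F'. snd s \<le> J" using fF' unfolding J_def by auto
        have Jlt: "J < j0" using lt s by auto
        have inter: "UU F' \<inter> reg i0 j0 = reg i0 J"
        proof
          show "UU F' \<inter> reg i0 j0 \<subseteq> reg i0 J" using Jmax unfolding UU_def reg_def by force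
          show "reg i0 J \<subseteq> UU F' \<inter> reg i0 j0"
          proof
            fix q assume q: "q \<in> reg i0 J"
            have "fst s \<le> i0" using imax s(1) F'_def by auto
            hence "q \<in> UU F'" using q s unfolding UU_def reg_def by (intro CollectI bexI[of _ s]) auto
            moreover have "q \<in> reg i0 j0" using q Jlt unfolding reg_def by auto
            ultimately show "q \<in> UU F' \<inter> reg i0 j0" by auto
          qed
        qed
        have cnt: "card (X \<inter> UU F) + card (X \<inter> reg i0 J) = card (X \<inter> UU F') + card (X \<inter> reg i0 j0)"
          if "finite X" for X
        proof -
          have "X \<inter> UU F = (X \<inter> UU F') \<union> (X \<inter> reg i0 j0)" using UF by auto
          moreover have "(X \<inter> UU F') \<inter> (X \<inter> reg i0 j0) = X \<inter> reg i0 J" using inter by auto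
          ultimately show ?thesis using card_Un_Int[of "X \<inter> UU F'" "X \<inter> reg i0 j0"] that by simp
        qed
        have "1 \<le> J" using s less.prems(2) F'_def by auto
        moreover have "J < i0" using Jlt tt by auto
        moreover have "i0 \<le> n" using tt by auto
        ultimately have "card (T \<inter> reg i0 J) \<le> card (D \<inter> reg i0 J)" using assms(5) by blast
        then show ?thesis using cnt[OF assms(2)] cnt[OF assms(3)] IH tt by linarith
      qed
    qed
  qed
qed

lemma exists_min:
  assumes "finite D" "d \<in> D"
  shows "\<exists>p\<in>Mt D. ple p d"
proof -
  define S where "S = {q\<in>D. ple q d}"
  define f where "f q = int (fst q) - int (snd q)" for q :: "nat \<times> nat"
  have fS: "finite S" using assms S_def by auto
  have "d \<in> S" using assms unfolding S_def ple_def by auto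
  hence ne: "f ` S \<noteq> {}" by auto
  obtain q where q: "q \<in> S" "f q = Min (f ` S)"
    using Min_in[OF finite_imageI[OF fS] ne] by auto
  have "q \<in> Mt D"
    unfolding Mt_def
  proof (intro CollectI conjI ballI impI)
    show "q \<in> D" using q S_def by auto
    fix q' assume q': "q' \<in> D" "ple q' q"
    have "q' \<in> S" using q' q(1) unfolding S_def ple_def by auto
    hence "f q \<le> f q'" using q(2) fS by simp
    thus "q' = q" using q'(2) unfolding f_def ple_def by (auto simp: prod_eq_iff)
  qed
  thus ?thesis using q S_def by auto
qed

lemma A:
  assumes "rook n T" "rook n D" "rle n T D" "card T < card D"
  shows "\<exists>p\<in>Mt D. rle n T (D - {p})"
proof (rule ccontr)
  assume H: "\<not> ?thesis"
  have fT: "finite T" using assms(1) rook_fin by auto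
  have fD: "finite D" using assms(2) rook_fin by auto
  have ex: "\<exists>t. 1 \<le> snd t \<and> snd t < fst t \<and> fst t \<le> n \<and>
        card (T \<inter> reg (fst t) (snd t)) = card (D \<inter> reg (fst t) (snd t)) \<and> p \<in> reg (fst t) (snd t)"
    if "p \<in> Mt D" for p
  proof -
    from H that have "\<not> rle n T (D - {p})" by blast
    then obtain i j where ij: "i \<in> {1..n}" "j\<in>{1..n}" "rmat (D - {p}) i j < rmat T i j"
      unfolding rle_def by (meson not_le)
    have ji: "j < i"
    proof (rule ccontr)
      assume "\<not> j < i"
      then have "rmat T i j = 0" unfolding rmat_def by simp
      then show False using ij(3) by simp
    qed
    have e1: "card ((D-{p}) \<inter> reg i j) < card (T \<inter> reg i j)" using ij(3) by (simp only: rmat_reg[OF ji])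
    have e2: "card (T \<inter> reg i j) \<le> card (D \<inter> reg i j)"
      using rle_reg[OF assms(3), of j i] ij ji by simp
    have pD: "p \<in> D" using that unfolding Mt_def by blast
    have pr: "p \<in> reg i j"
    proof (rule ccontr)
      assume "p \<notin> reg i j"
      then have "(D-{p}) \<inter> reg i j = D \<inter> reg i j" by auto
      with e1 e2 show False by simp
    qed
    then have "(D - {p}) \<inter> reg i j = (D \<inter> reg i j) - {p}" by auto
    hence "card ((D-{p}) \<inter> reg i j) = card (D \<inter> reg i j) - 1"
      using pD pr fD by (simp add: card_Diff_singleton)
    hence "card (T \<inter> reg i j) = card (D \<inter> reg i j)" using e1 e2 by linarith
    then show ?thesis apply (intro exI[of _ "(i,j)"]) using ij ji pr by simp
  qed
  have "\<forall>p\<in>Mt D. \<exists>t. 1 \<le> snd t \<and> snd t < fst t \<and> fst t \<le> n \<and>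
        card (T \<inter> reg (fst t) (snd t)) = card (D \<inter> reg (fst t) (snd t)) \<and> p \<in> reg (fst t) (snd t)"
    by (rule ballI) (rule ex)
  from bchoice[OF this] obtain f where f: "\<forall>p\<in>Mt D. 1 \<le> snd (f p) \<and> snd (f p) < fst (f p) \<and> fst (f p) \<le> n \<and>
        card (T \<inter> reg (fst (f p)) (snd (f p))) = card (D \<inter> reg (fst (f p)) (snd (f p))) \<and>
        p \<in> reg (fst (f p)) (snd (f p))"
    by (elim exE) assumption
  define F where "F = f ` Mt D"
  have fF: "finite F" unfolding F_def Mt_def using fD by auto
  have DU: "D \<subseteq> UU F"
  proof
    fix d assume d: "d \<in> D"
    obtain p where p: "p \<in> Mt D" "ple p d" using exists_min[OF fD d] by auto
    have "p \<in> reg (fst (f p)) (snd (f p))" using f p(1) by auto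
    hence "fst (f p) \<le> fst d \<and> snd d \<le> snd (f p)" using p(2) unfolding reg_def ple_def by auto
    thus "d \<in> UU F" unfolding UU_def F_def using p(1) by auto
  qed
  have "card (D \<inter> UU F) \<le> card (T \<inter> UU F)"
  proof -
    have tF: "\<forall>t\<in>F. 1 \<le> snd t \<and> snd t < fst t \<and> fst t \<le> n \<and>
        card (T \<inter> reg (fst t) (snd t)) = card (D \<inter> reg (fst t) (snd t))"
      unfolding F_def using f by auto
    show ?thesis by (rule B[OF fF fT fD tF rle_reg[OF assms(3)]])
  qed
  moreover have "card (D \<inter> UU F) = card D" using DU by (simp add: Int_absorb2)
  moreover have "card (T \<inter> UU F) \<le> card T" using fT by (simp add: card_mono)
  ultimately show False using assms(4) by linarith
qed

lemma ident:
  assumes "1 \<le> b" "b < a" "finite Z"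
  shows "card (Z \<inter> reg a b) + card (Z \<inter> reg (a+1) (b-1)) =
     (if (a,b) \<in> Z then 1 else 0) + card (Z \<inter> reg (a+1) b) + card (Z \<inter> reg a (b-1))"
proof -
  have e1: "Z \<inter> reg a b = (Z \<inter> {(a,b)}) \<union> ((Z \<inter> reg (a+1) b) \<union> (Z \<inter> reg a (b-1)))"
    using assms unfolding reg_def by auto
  have d1: "(Z \<inter> {(a,b)}) \<inter> ((Z \<inter> reg (a+1) b) \<union> (Z \<inter> reg a (b-1))) = {}"
    using assms unfolding reg_def by auto
  have e2: "(Z \<inter> reg (a+1) b) \<inter> (Z \<inter> reg a (b-1)) = Z \<inter> reg (a+1) (b-1)"
    unfolding reg_def by auto
  have c1: "card (Z \<inter> reg a b) = card (Z \<inter> {(a,b)}) + card ((Z \<inter> reg (a+1) b) \<union> (Z \<inter> reg a (b-1)))"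
    unfolding e1 by (rule card_Un_disjoint) (use d1 assms(3) in auto)
  have c2: "card (Z \<inter> reg (a+1) b) + card (Z \<inter> reg a (b-1)) =
      card ((Z \<inter> reg (a+1) b) \<union> (Z \<inter> reg a (b-1))) + card (Z \<inter> reg (a+1) (b-1))"
    unfolding e2[symmetric] by (rule card_Un_Int) (use assms(3) in auto)
  have c3: "card (Z \<inter> {(a,b)}) = (if (a,b) \<in> Z then 1 else 0)" by auto
  show ?thesis using c1 c2 c3 by linarith
qed

lemma rle_antisym:
  assumes "X \<subseteq> Phi n" "Y \<subseteq> Phi n" "rle n X Y" "rle n Y X"
  shows "X = Y"
proof -
  have fX1: "finite X" using assms(1) finite_Phi by (rule finite_subset)
  have fX2: "finite Y" using assms(2) finite_Phi by (rule finite_subset)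
  have c: "card (X \<inter> reg i j) = card (Y \<inter> reg i j)" if "j < i" for i j
  proof (cases "i \<le> n \<and> 1 \<le> j")
    case True
    have "card (X \<inter> reg i j) \<le> card (Y \<inter> reg i j)"
      by (rule rle_reg[OF assms(3)]) (use True that in auto)
    moreover have "card (Y \<inter> reg i j) \<le> card (X \<inter> reg i j)"
      by (rule rle_reg[OF assms(4)]) (use True that in auto)
    ultimately show ?thesis by simp
  next
    case False
    then have "X \<inter> reg i j = {}" "Y \<inter> reg i j = {}"
      using assms(1,2) unfolding Phi_def reg_def by auto
    then show ?thesis by simp
  qed
  show ?thesis
  proof (rule set_eqI)
    fix p
    show "p \<in> X \<longleftrightarrow> p \<in> Y"
    proof (cases "p \<in> X \<union> Y")
      case True
      obtain a b where p: "p = (a,b)" by force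
      have ab: "1 \<le> b" "b < a" using True assms(1,2) p unfolding Phi_def by auto
      have r: "b - 1 < a + 1" "b < a + 1" "b - 1 < a" using ab by auto
      have q1: "card (X \<inter> reg (a+1) (b-1)) = card (Y \<inter> reg (a+1) (b-1))"
        "card (X \<inter> reg (a+1) b) = card (Y \<inter> reg (a+1) b)"
        "card (X \<inter> reg a (b-1)) = card (Y \<inter> reg a (b-1))"
        using c[OF r(1)] c[OF r(2)] c[OF r(3)] by simp_all
      have q0: "card (X \<inter> reg a b) = card (Y \<inter> reg a b)" using c[OF ab(2)] .
      have "(if (a,b) \<in> X then 1 else 0 :: nat) = (if (a,b) \<in> Y then 1 else 0)"
        using ident[OF ab fX1] ident[OF ab fX2] q0 q1 by linarith
      then show ?thesis unfolding p by (simp split: if_splits)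
    next
      case False then show ?thesis by auto
    qed
  qed
qed

lemma rook_remove: "rook n D \<Longrightarrow> rook n (D - {p})"
proof -
  assume r: "rook n D"
  have fD: "finite D" using r rook_fin by auto
  show ?thesis unfolding rook_def
  proof (intro conjI allI)
    show "D - {p} \<subseteq> Phi n" using r unfolding rook_def by auto
    fix k
    have "card ((D-{p}) \<inter> row n k) \<le> card (D \<inter> row n k)" using fD by (intro card_mono) auto
    thus "card ((D-{p}) \<inter> row n k) \<le> 1" using r unfolding rook_def by (meson order_trans)
    have "card ((D-{p}) \<inter> col n k) \<le> card (D \<inter> col n k)" using fD by (intro card_mono) auto
    thus "card ((D-{p}) \<inter> col n k) \<le> 1" using r unfolding rook_def by (meson order_trans)
  qed
qed

lemma rle_remove: "finite D \<Longrightarrow> rle n (D - {p}) D"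
  unfolding rle_def using rmat_mono by blast

theorem lemma3p8:
  fixes n :: nat and D :: "(nat \<times> nat) set"
  assumes "n \<ge> 1" and "rook n D"
  shows "Lt n D = Nt D"
proof
  have fD: "finite D" using assms(2) rook_fin by auto
  have rem: "rook n (D - {p}) \<and> rless n (D - {p}) D \<and> card (D - {p}) < card D" if "p \<in> Mt D" for p
  proof -
    have "p \<in> D" using that Mt_def by auto
    moreover have "card (D - {p}) < card D" using \<open>p \<in> D\<close> fD by (meson card_Diff1_less)
    ultimately show ?thesis using rook_remove[OF assms(2)] rle_remove[OF fD] fD
      unfolding rless_def by auto
  qed
  show "Lt n D \<subseteq> Nt D"
  proof
    fix T assume "T \<in> Lt n D"
    then have T: "rook n T" "rless n T D" "card T < card D"
      and mx: "\<forall>S. rook n S \<and> rle n T S \<and> rless n S D \<and> card S < card D \<longrightarrow> S = T"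
      unfolding Lt_def by auto
    obtain p where p: "p \<in> Mt D" "rle n T (D - {p})" using A[OF T(1) assms(2) _ T(3)] T(2)
      unfolding rless_def by blast
    have "D - {p} = T" using mx rem[OF p(1)] p(2) by blast
    thus "T \<in> Nt D" unfolding Nt_def using p(1) by blast
  qed
  show "Nt D \<subseteq> Lt n D"
  proof
    fix T assume "T \<in> Nt D"
    then obtain p where p: "p \<in> Mt D" "T = D - {p}" unfolding Nt_def by auto
    have mx: "S = T" if S: "rook n S" "rle n T S" "rless n S D" "card S < card D" for S
    proof -
      obtain p' where p': "p' \<in> Mt D" "rle n S (D - {p'})"
        using A[OF S(1) assms(2) _ S(4)] S(3) unfolding rless_def by blast
      have tr: "rle n (D - {p}) (D - {p'})" using rle_trans[OF S(2) p'(2)] p(2) by simp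
      have "p' = p"
      proof (rule ccontr)
        assume ne: "p' \<noteq> p"
        obtain a b where ab: "p' = (a,b)" by force
        have p'D: "p' \<in> D" using p' Mt_def by auto
        hence bnd: "1 \<le> b" "b < a" "a \<le> n" using assms(2) ab unfolding rook_def Phi_def by auto
        have "card ((D-{p}) \<inter> reg a b) \<le> card ((D-{p'}) \<inter> reg a b)"
          using rle_reg[OF tr bnd(1,2,3)] .
        moreover have pr: "p' \<in> reg a b" using ab unfolding reg_def by auto
        moreover have "(D-{p'}) \<inter> reg a b = (D \<inter> reg a b) - {p'}" by auto
        moreover have "card ((D \<inter> reg a b) - {p'}) < card (D \<inter> reg a b)"
          using pr p'D fD by (intro card_Diff1_less) auto
        ultimately have lt: "card ((D-{p}) \<inter> reg a b) < card (D \<inter> reg a b)" by simp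
        have "p \<in> reg a b"
        proof (rule ccontr)
          assume "p \<notin> reg a b"
          hence "(D-{p}) \<inter> reg a b = D \<inter> reg a b" by auto
          thus False using lt by simp
        qed
        hence "ple p' p" using ab unfolding reg_def ple_def by auto
        thus False using p(1) p'D ne unfolding Mt_def by auto
      qed
      hence "rle n S T" using p' p by simp
      moreover have "S \<subseteq> Phi n" "T \<subseteq> Phi n" using S(1) rem[OF p(1)] p(2)
        unfolding rook_def by auto
      ultimately show "S = T" using rle_antisym S(2) by blast
    qed
    show "T \<in> Lt n D" unfolding Lt_def using rem[OF p(1)] p(2) mx by auto
  qed
qed

end
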